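(* Let $T>0$, let $f,h,g:[0,T]\to\mathbb{R}$ be continuous with $g$ not identically zero, and let $\mathbf{m},x_0,x_T\in\mathbb{R}^d$. For a control $\mathbf{u}:[0,T]\to\mathbb{R}^d$ let $\mathbf{x}^u$ solve $\frac{d\mathbf{x}_t}{dt}=f_t\mathbf{x}_t+h_t\mathbf{m}+g_t\mathbf{u}_t$, $\mathbf{x}^u_0=x_0$, and for $\gamma\in(0,\infty)$ let $$\mathcal{J}(\mathbf{u},\gamma)=\int_0^T\tfrac12\|\mathbf{u}_t\|_2^2\,dt+\tfrac\gamma2\|\mathbf{x}^u_T-x_T\|_2^2 .$$ Let $\mathbf{u}^*_{\cdot,\gamma}$ be the optimal control minimizing $\mathcal{J}(\cdot,\gamma)$, and let $\mathbf{u}^*_{t,\infty}=\lim_{\gamma\to\infty}\mathbf{u}^*_{t,\gamma}$ (for each $t$), and define $$\mathcal{J}(\mathbf{u}^*_{\cdot,\infty},\infty)=\int_0^T\tfrac12\|\mathbf{u}^*_{t,\infty}\|_2^2\,dt+\lim_{\gamma\to\infty}\tfrac\gamma2\|\mathbf{x}^{u^*_{\gamma}}_T-x_T\|_2^2 .$$ Then for every $\gamma\in(0,\infty)$, $$\mathcal{J}(\mathbf{u}^*_{\cdot,\gamma},\gamma)\le\mathcal{J}(\mathbf{u}^*_{\cdot,\infty},\infty).$$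
   Context: Notation: $\bar f_t=\int_0^t f_z\,dz$, $\bar h_T=\int_0^T e^{-\bar f_z}h_z\,dz$, $\bar g^2_T=\int_0^T e^{-2\bar f_z}g_z^2\,dz$, $a=e^{\bar f_T}x_0+\mathbf{m}e^{\bar f_T}\bar h_T-x_T$. Explicitly the optimal control is $\mathbf{u}^*_{t,\gamma}=-g_te^{\bar f_T-\bar f_t}\,a/(\gamma^{-1}+e^{2\bar f_T}\bar g^2_T)$, so $\mathbf{u}^*_{t,\infty}=-g_te^{\bar f_T-\bar f_t}\,a/(e^{2\bar f_T}\bar g^2_T)$, which steers $x_0$ exactly to $x_T$; the limit term in $\mathcal{J}(\mathbf{u}^*_{\cdot,\infty},\infty)$ equals $0$. *)

theory Defs
  imports "HOL-Analysis.Analysis"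
begin

definition admissible :: "real \<Rightarrow> (real \<Rightarrow> real^'d) \<Rightarrow> bool" where
  "admissible T u \<longleftrightarrow> continuous_on {0..T} u"

definition solves_state ::
  "real \<Rightarrow> (real \<Rightarrow> real) \<Rightarrow> (real \<Rightarrow> real) \<Rightarrow> (real \<Rightarrow> real) \<Rightarrow> real^'d \<Rightarrow> real^'d
    \<Rightarrow> (real \<Rightarrow> real^'d) \<Rightarrow> (real \<Rightarrow> real^'d) \<Rightarrow> bool" where
  "solves_state T f h g m x0 u x \<longleftrightarrow>
     x 0 = x0 \<and>
     (\<forall>t\<in>{0..T}. (x has_vector_derivative (f t *\<^sub>R x t + h t *\<^sub>R m + g t *\<^sub>R u t)) (at t within {0..T}))"

text \<open>Terminal state x^u_T (the solution is unique on [0,T]).\<close>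
definition terminal_state ::
  "real \<Rightarrow> (real \<Rightarrow> real) \<Rightarrow> (real \<Rightarrow> real) \<Rightarrow> (real \<Rightarrow> real) \<Rightarrow> real^'d \<Rightarrow> real^'d
    \<Rightarrow> (real \<Rightarrow> real^'d) \<Rightarrow> real^'d" where
  "terminal_state T f h g m x0 u = (THE y. \<exists>x. solves_state T f h g m x0 u x \<and> x T = y)"

definition cost ::
  "real \<Rightarrow> (real \<Rightarrow> real) \<Rightarrow> (real \<Rightarrow> real) \<Rightarrow> (real \<Rightarrow> real) \<Rightarrow> real^'d \<Rightarrow> real^'d \<Rightarrow> real^'d
    \<Rightarrow> (real \<Rightarrow> real^'d) \<Rightarrow> real \<Rightarrow> real" where
  "cost T f h g m x0 xT u \<gamma> =
     integral {0..T} (\<lambda>t. 1/2 * (norm (u t))\<^sup>2)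
     + \<gamma> / 2 * (norm (terminal_state T f h g m x0 u - xT))\<^sup>2"

definition optimal_control ::
  "real \<Rightarrow> (real \<Rightarrow> real) \<Rightarrow> (real \<Rightarrow> real) \<Rightarrow> (real \<Rightarrow> real) \<Rightarrow> real^'d \<Rightarrow> real^'d \<Rightarrow> real^'d
    \<Rightarrow> real \<Rightarrow> (real \<Rightarrow> real^'d) \<Rightarrow> bool" where
  "optimal_control T f h g m x0 xT \<gamma> u \<longleftrightarrow>
     admissible T u \<and>
     (\<forall>v. admissible T v \<longrightarrow> cost T f h g m x0 xT u \<gamma> \<le> cost T f h g m x0 xT v \<gamma>)"

end

theory Submission
  imports Defs
begin

lemma terminal_formula:
  fixes f h g :: "real \<Rightarrow> real" and m x0 :: "real^'d" and v :: "real \<Rightarrow> real^'d"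
  assumes T: "0 \<le> T"
    and cf: "continuous_on {0..T} f" and ch: "continuous_on {0..T} h" and cg: "continuous_on {0..T} g"
    and cv: "continuous_on {0..T} v"
  shows "terminal_state T f h g m x0 v = exp (integral {0..T} f) *\<^sub>R
      (x0 + integral {0..T} (\<lambda>s. exp (- integral {0..s} f) *\<^sub>R (h s *\<^sub>R m + g s *\<^sub>R v s)))"
proof -
  define F where "F t = integral {0..t} f" for t
  define G where "G t = integral {0..t} (\<lambda>s. exp (- F s) *\<^sub>R (h s *\<^sub>R m + g s *\<^sub>R v s))" for t
  define x where "x t = exp (F t) *\<^sub>R (x0 + G t)" for t
  have dF: "(F has_real_derivative f t) (at t within {0..T})" if "t \<in> {0..T}" for t
    unfolding F_def has_real_derivative_iff_has_vector_derivative
    using integral_has_vector_derivative[OF cf that] .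
  have cF: "continuous_on {0..T} F"
    unfolding F_def by (rule indefinite_integral_continuous_1[OF integrable_continuous_real[OF cf]])
  have cI: "continuous_on {0..T} (\<lambda>s. exp (- F s) *\<^sub>R (h s *\<^sub>R m + g s *\<^sub>R v s))"
    by (intro continuous_intros cF ch cg cv)
  have dG: "(G has_vector_derivative (exp (- F t) *\<^sub>R (h t *\<^sub>R m + g t *\<^sub>R v t))) (at t within {0..T})"
    if "t \<in> {0..T}" for t
    unfolding G_def using integral_has_vector_derivative[OF cI that] .
  have dx: "(x has_vector_derivative (f t *\<^sub>R x t + h t *\<^sub>R m + g t *\<^sub>R v t)) (at t within {0..T})"
    if t: "t \<in> {0..T}" for t
  proof -
    have e: "((\<lambda>t. exp (F t)) has_real_derivative exp (F t) * f t) (at t within {0..T})"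
      by (rule DERIV_chain2[OF DERIV_exp dF[OF t]])
    have "(x has_vector_derivative (exp (F t) *\<^sub>R (exp (- F t) *\<^sub>R (h t *\<^sub>R m + g t *\<^sub>R v t))
        + (exp (F t) * f t) *\<^sub>R (x0 + G t))) (at t within {0..T})"
      unfolding x_def
      using has_vector_derivative_scaleR[OF e has_vector_derivative_add[OF has_vector_derivative_const dG[OF t]]] by simp
    moreover have "exp (F t) *\<^sub>R (exp (- F t) *\<^sub>R (h t *\<^sub>R m + g t *\<^sub>R v t))
        + (exp (F t) * f t) *\<^sub>R (x0 + G t) = f t *\<^sub>R x t + h t *\<^sub>R m + g t *\<^sub>R v t"
      by (simp add: x_def exp_minus field_simps)
    ultimately show ?thesis by simp
  qed
  have sx: "solves_state T f h g m x0 v x"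
    unfolding solves_state_def using dx by (simp add: x_def G_def F_def)
  have uniq: "y T = x T" if sy: "solves_state T f h g m x0 v y" for y
  proof -
    define z where "z t = exp (- F t) *\<^sub>R (y t - x t)" for t
    have dz: "(z has_vector_derivative 0) (at t within {0..T})" if t: "t \<in> {0..T}" for t
    proof -
      have e: "((\<lambda>t. exp (- F t)) has_real_derivative exp (- F t) * (- f t)) (at t within {0..T})"
        by (rule DERIV_chain2[OF DERIV_exp DERIV_minus[OF dF[OF t]]])
      have dy: "(y has_vector_derivative (f t *\<^sub>R y t + h t *\<^sub>R m + g t *\<^sub>R v t)) (at t within {0..T})"
        using sy t unfolding solves_state_def by blast
      have "(z has_vector_derivative (exp (- F t) *\<^sub>R ((f t *\<^sub>R y t + h t *\<^sub>R m + g t *\<^sub>R v t) - (f t *\<^sub>R x t + h t *\<^sub>R m + g t *\<^sub>R v t))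
          + (exp (- F t) * (- f t)) *\<^sub>R (y t - x t))) (at t within {0..T})"
        unfolding z_def
        by (rule has_vector_derivative_scaleR[OF e has_vector_derivative_diff[OF dy dx[OF t]]])
      moreover have "exp (- F t) *\<^sub>R ((f t *\<^sub>R y t + h t *\<^sub>R m + g t *\<^sub>R v t) - (f t *\<^sub>R x t + h t *\<^sub>R m + g t *\<^sub>R v t))
          + (exp (- F t) * (- f t)) *\<^sub>R (y t - x t) = 0"
        by (simp add: algebra_simps)
      ultimately show ?thesis by simp
    qed
    obtain c where c: "\<And>t. t \<in> {0..T} \<Longrightarrow> z t = c"
      using has_vector_derivative_zero_constant[of "{0..T}" z] dz by auto
    have "z 0 = 0" using sy sx unfolding solves_state_def z_def by simp
    hence "z T = 0" using c[of 0] c[of T] T by simp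
    thus ?thesis unfolding z_def by simp
  qed
  have "terminal_state T f h g m x0 v = x T"
    unfolding terminal_state_def
    by (rule the_equality) (use sx uniq in blast)+
  thus ?thesis by (simp add: x_def F_def G_def)
qed


lemma terminal_affine:
  fixes f h g :: "real \<Rightarrow> real" and m x0 :: "real^'d" and v :: "real \<Rightarrow> real^'d"
  assumes T: "0 \<le> T"
    and cf: "continuous_on {0..T} f" and ch: "continuous_on {0..T} h" and cg: "continuous_on {0..T} g"
    and cv: "continuous_on {0..T} v"
  shows "terminal_state T f h g m x0 v = exp (integral {0..T} f) *\<^sub>R x0
     + integral {0..T} (\<lambda>s. (exp (integral {0..T} f - integral {0..s} f) * h s) *\<^sub>R m)
     + integral {0..T} (\<lambda>s. (exp (integral {0..T} f - integral {0..s} f) * g s) *\<^sub>R v s)"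
proof -
  define F where "F t = integral {0..t} f" for t
  have cF: "continuous_on {0..T} F"
    unfolding F_def by (rule indefinite_integral_continuous_1[OF integrable_continuous_real[OF cf]])
  have i1: "(\<lambda>s. (exp (F T - F s) * h s) *\<^sub>R m) integrable_on {0..T}"
    by (intro integrable_continuous_real continuous_intros cF ch)
  have i2: "(\<lambda>s. (exp (F T - F s) * g s) *\<^sub>R v s) integrable_on {0..T}"
    by (intro integrable_continuous_real continuous_intros cF cg cv)
  have eq: "(\<lambda>s. exp (F T) *\<^sub>R (exp (- F s) *\<^sub>R (h s *\<^sub>R m + g s *\<^sub>R v s)))
     = (\<lambda>s. (exp (F T - F s) * h s) *\<^sub>R m + (exp (F T - F s) * g s) *\<^sub>R v s)"
    by (rule ext) (simp add: exp_diff exp_minus scaleR_add_right field_simps)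
  have "exp (F T) *\<^sub>R integral {0..T} (\<lambda>s. exp (- F s) *\<^sub>R (h s *\<^sub>R m + g s *\<^sub>R v s))
     = integral {0..T} (\<lambda>s. exp (F T) *\<^sub>R (exp (- F s) *\<^sub>R (h s *\<^sub>R m + g s *\<^sub>R v s)))"
    by (rule integral_cmul[symmetric])
  also have "\<dots> = integral {0..T} (\<lambda>s. (exp (F T - F s) * h s) *\<^sub>R m)
      + integral {0..T} (\<lambda>s. (exp (F T - F s) * g s) *\<^sub>R v s)"
    unfolding eq by (rule integral_add[OF i1 i2])
  finally show ?thesis
    using terminal_formula[OF assms, of m x0] unfolding F_def[symmetric]
    by (simp add: scaleR_add_right add.assoc)
qed


lemma cost_split:
  fixes k :: "real \<Rightarrow> real" and u w :: "real \<Rightarrow> real^'d" and a :: "real^'d"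
  assumes ck: "continuous_on {0..T} k" and cw: "continuous_on {0..T} w"
    and u: "\<And>s. u s = - (c * k s) *\<^sub>R a"
    and gc: "\<gamma> * (1 - c * integral {0..T} (\<lambda>s. (k s)\<^sup>2)) = c"
  shows "integral {0..T} (\<lambda>t. 1/2 * (norm (u t + w t))\<^sup>2)
     + \<gamma> / 2 * (norm (a + integral {0..T} (\<lambda>s. k s *\<^sub>R (u s + w s))))\<^sup>2
   = integral {0..T} (\<lambda>t. 1/2 * (norm (u t))\<^sup>2)
     + \<gamma> / 2 * (norm (a + integral {0..T} (\<lambda>s. k s *\<^sub>R u s)))\<^sup>2
     + integral {0..T} (\<lambda>t. 1/2 * (norm (w t))\<^sup>2)
     + \<gamma> / 2 * (norm (integral {0..T} (\<lambda>s. k s *\<^sub>R w s)))\<^sup>2"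
proof -
  define K where "K = integral {0..T} (\<lambda>s. (k s)\<^sup>2)"
  define I where "I = integral {0..T} (\<lambda>s. k s *\<^sub>R w s)"
  have cu: "continuous_on {0..T} u" unfolding u by (intro continuous_intros ck)
  have iK: "(\<lambda>s. (k s)\<^sup>2) integrable_on {0..T}"
    by (intro integrable_continuous_real continuous_intros ck)
  have iw: "(\<lambda>s. k s *\<^sub>R w s) integrable_on {0..T}"
    by (intro integrable_continuous_real continuous_intros ck cw)
  have iu: "(\<lambda>s. k s *\<^sub>R u s) integrable_on {0..T}"
    by (intro integrable_continuous_real continuous_intros ck cu)
  have Iu: "integral {0..T} (\<lambda>s. k s *\<^sub>R u s) = - (c * K) *\<^sub>R a"
  proof -
    have "(\<lambda>s. k s *\<^sub>R u s) = (\<lambda>s. (- c * (k s)\<^sup>2) *\<^sub>R a)"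
      by (rule ext) (simp add: u power2_eq_square)
    hence "integral {0..T} (\<lambda>s. k s *\<^sub>R u s) = integral {0..T} (\<lambda>s. - c * (k s)\<^sup>2) *\<^sub>R a"
      using integral_unique[OF has_integral_scaleR_left[OF integrable_integral[OF integrable_on_cmult_left[OF iK, of "- c"]]], of a]
      by simp
    also have "\<dots> = - (c * K) *\<^sub>R a" using iK by (simp add: K_def)
    finally show ?thesis .
  qed
  have Iuw: "integral {0..T} (\<lambda>s. k s *\<^sub>R (u s + w s)) = - (c * K) *\<^sub>R a + I"
    using integral_add[OF iu iw] Iu by (simp add: scaleR_add_right I_def)
  have inn: "integral {0..T} (\<lambda>t. inner (u t) (w t)) = - c * inner a I"
  proof -
    have e: "(\<lambda>t. inner (u t) (w t)) = (\<lambda>t. - c * inner a (k t *\<^sub>R w t))"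
      by (rule ext) (simp add: u)
    have "integral {0..T} (\<lambda>t. inner a (k t *\<^sub>R w t)) = inner a I"
      unfolding I_def using integral_linear[OF iw bounded_linear_inner_right[of a]] by (simp add: o_def)
    thus ?thesis unfolding e by simp
  qed
  have i2u: "(\<lambda>t. 1/2 * (norm (u t))\<^sup>2) integrable_on {0..T}"
    by (intro integrable_continuous_real continuous_intros cu)
  have i2w: "(\<lambda>t. 1/2 * (norm (w t))\<^sup>2) integrable_on {0..T}"
    by (intro integrable_continuous_real continuous_intros cw)
  have iuw: "(\<lambda>t. inner (u t) (w t)) integrable_on {0..T}"
    by (intro integrable_continuous_real continuous_intros cw cu)
  have e2: "(\<lambda>t. 1/2 * (norm (u t + w t))\<^sup>2) = (\<lambda>t. 1/2 * (norm (u t))\<^sup>2 + inner (u t) (w t) + 1/2 * (norm (w t))\<^sup>2)"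
    by (rule ext) (simp add: power2_norm_eq_inner inner_add_left inner_add_right inner_commute algebra_simps)
  have int2: "integral {0..T} (\<lambda>t. 1/2 * (norm (u t + w t))\<^sup>2) =
     integral {0..T} (\<lambda>t. 1/2 * (norm (u t))\<^sup>2) - c * inner a I + integral {0..T} (\<lambda>t. 1/2 * (norm (w t))\<^sup>2)"
    unfolding e2 using integral_add[OF integrable_add[OF i2u iuw] i2w] integral_add[OF i2u iuw] inn by simp
  define b where "b = a - (c * K) *\<^sub>R a"
  have gb: "\<gamma> * inner b I = c * inner a I"
  proof -
    have "inner b I = (1 - c * K) * inner a I" by (simp add: b_def inner_diff_left algebra_simps)
    thus ?thesis using gc unfolding K_def[symmetric] by simp
  qed
  have nb: "(norm (b + I))\<^sup>2 = (norm b)\<^sup>2 + 2 * inner b I + (norm I)\<^sup>2"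
    by (simp add: power2_norm_eq_inner inner_add_left inner_add_right inner_commute)
  have ab1: "a + (- (c * K) *\<^sub>R a + I) = b + I" by (simp add: b_def)
  have ab2: "a + - (c * K) *\<^sub>R a = b" by (simp add: b_def)
  have key: "\<gamma> / 2 * (norm (b + I))\<^sup>2 = \<gamma> / 2 * (norm b)\<^sup>2 + c * inner a I + \<gamma> / 2 * (norm I)\<^sup>2"
  proof -
    have "\<gamma> / 2 * (norm (b + I))\<^sup>2 = \<gamma> / 2 * (norm b)\<^sup>2 + \<gamma> * inner b I + \<gamma> / 2 * (norm I)\<^sup>2"
      unfolding nb by (simp add: algebra_simps)
    thus ?thesis using gb by simp
  qed
  show ?thesis
    unfolding Iuw Iu int2 I_def[symmetric] ab1 ab2 key by simp
qed


lemma int_ku: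
  fixes k :: "real \<Rightarrow> real" and a :: "real^'d"
  assumes ck: "continuous_on {0..T} k"
  shows "integral {0..T} (\<lambda>s. k s *\<^sub>R (- (c * k s) *\<^sub>R a)) = - (c * integral {0..T} (\<lambda>s. (k s)\<^sup>2)) *\<^sub>R a"
proof -
  have iK: "(\<lambda>s. (k s)\<^sup>2) integrable_on {0..T}"
    by (intro integrable_continuous_real continuous_intros ck)
  have "(\<lambda>s. k s *\<^sub>R (- (c * k s) *\<^sub>R a)) = (\<lambda>s. (- c * (k s)\<^sup>2) *\<^sub>R a)"
    by (rule ext) (simp add: power2_eq_square)
  hence "integral {0..T} (\<lambda>s. k s *\<^sub>R (- (c * k s) *\<^sub>R a)) = integral {0..T} (\<lambda>s. - c * (k s)\<^sup>2) *\<^sub>R a"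
    using integral_unique[OF has_integral_scaleR_left[OF integrable_integral[OF integrable_on_cmult_left[OF iK, of "- c"]]], of a]
    by simp
  also have "\<dots> = - (c * integral {0..T} (\<lambda>s. (k s)\<^sup>2)) *\<^sub>R a" using iK by simp
  finally show ?thesis .
qed

theorem proposition4p3:
  fixes T :: real and f h g :: "real \<Rightarrow> real"
    and m x0 xT :: "real^'d"
    and ustar :: "real \<Rightarrow> real \<Rightarrow> real^'d"
  assumes "T > 0"
    and "continuous_on {0..T} f" and "continuous_on {0..T} h" and "continuous_on {0..T} g"
    and "\<exists>t\<in>{0..T}. g t \<noteq> 0"
    and "\<And>\<gamma>. \<gamma> > 0 \<Longrightarrow> optimal_control T f h g m x0 xT \<gamma> (ustar \<gamma>)"
  shows "\<exists>uinf L.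
           (\<forall>t\<in>{0..T}. ((\<lambda>\<gamma>. ustar \<gamma> t) \<longlongrightarrow> uinf t) at_top)
         \<and> ((\<lambda>\<gamma>. \<gamma> / 2 * (norm (terminal_state T f h g m x0 (ustar \<gamma>) - xT))\<^sup>2) \<longlongrightarrow> L) at_top
         \<and> (\<forall>\<gamma>>0. cost T f h g m x0 xT (ustar \<gamma>) \<gamma>
                    \<le> integral {0..T} (\<lambda>t. 1/2 * (norm (uinf t))\<^sup>2) + L)"
proof -
  note T = assms(1) and cf = assms(2) and ch = assms(3) and cg = assms(4)
    and gnz = assms(5) and opt = assms(6)
  define F where "F t = integral {0..t} f" for t
  have cF: "continuous_on {0..T} F"
    unfolding F_def by (rule indefinite_integral_continuous_1[OF integrable_continuous_real[OF cf]])
  define k where "k s = exp (F T - F s) * g s" for s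
  have ck: "continuous_on {0..T} k" unfolding k_def by (intro continuous_intros cF cg)
  define K where "K = integral {0..T} (\<lambda>s. (k s)\<^sup>2)"
  define a where "a = exp (F T) *\<^sub>R x0 + integral {0..T} (\<lambda>s. (exp (F T - F s) * h s) *\<^sub>R m) - xT"
  have tform: "terminal_state T f h g m x0 v - xT = a + integral {0..T} (\<lambda>s. k s *\<^sub>R v s)"
    if "continuous_on {0..T} v" for v
  proof -
    have e: "terminal_state T f h g m x0 v = exp (F T) *\<^sub>R x0
      + integral {0..T} (\<lambda>s. (exp (F T - F s) * h s) *\<^sub>R m) + integral {0..T} (\<lambda>s. k s *\<^sub>R v s)"
      using terminal_affine[OF _ cf ch cg that, of m x0] T unfolding k_def F_def by simp
    show ?thesis unfolding e a_def by (simp only: diff_add_eq add_diff_eq)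
  qed
  have costf: "cost T f h g m x0 xT v \<gamma> = integral {0..T} (\<lambda>t. 1/2 * (norm (v t))\<^sup>2)
      + \<gamma> / 2 * (norm (a + integral {0..T} (\<lambda>s. k s *\<^sub>R v s)))\<^sup>2"
    if "continuous_on {0..T} v" for v \<gamma>
    unfolding cost_def tform[OF that] ..
  have Kpos: "K > 0"
  proof -
    have K0: "K \<ge> 0" unfolding K_def
      by (intro integral_nonneg integrable_continuous_real continuous_intros ck) simp
    obtain t where t: "t \<in> {0..T}" "g t \<noteq> 0" using gnz by blast
    have "K \<noteq> 0"
    proof
      assume "K = 0"
      hence "\<forall>x\<in>cbox 0 T. (k x)\<^sup>2 = 0"
        using integral_cbox_eq_0_iff[of 0 T "\<lambda>s. (k s)\<^sup>2"] T
        unfolding K_def by (auto intro!: continuous_intros ck)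
      hence "k t = 0" using t by auto
      thus False using t unfolding k_def by simp
    qed
    thus ?thesis using K0 by simp
  qed
  have optle: "cost T f h g m x0 xT (ustar \<gamma>) \<gamma> \<le> cost T f h g m x0 xT v \<gamma>"
    if "\<gamma> > 0" "admissible T v" for \<gamma> v
    using opt[OF that(1)] that(2) unfolding optimal_control_def by blast
  define c where "c \<gamma> = \<gamma> / (1 + \<gamma> * K)" for \<gamma>
  define uu where "uu \<gamma> s = - (c \<gamma> * k s) *\<^sub>R a" for \<gamma> s
  have cuu: "continuous_on {0..T} (uu \<gamma>)" for \<gamma> unfolding uu_def by (intro continuous_intros ck)
  have same: "ustar \<gamma> t = uu \<gamma> t" if g0: "\<gamma> > 0" and t: "t \<in> {0..T}" for \<gamma> t
  proof -
    have gc: "\<gamma> * (1 - c \<gamma> * K) = c \<gamma>"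
      proof -
      have "1 + \<gamma> * K > 0" using g0 Kpos by (simp add: add_pos_pos)
      thus ?thesis unfolding c_def by (simp add: field_simps)
    qed
    have adm: "admissible T (ustar \<gamma>)" using opt[OF g0] unfolding optimal_control_def by (rule conjunct1)
    have le: "cost T f h g m x0 xT (ustar \<gamma>) \<gamma> \<le> cost T f h g m x0 xT (uu \<gamma>) \<gamma>"
      using optle[OF g0, of "uu \<gamma>"] cuu unfolding admissible_def by simp
    define w where "w s = ustar \<gamma> s - uu \<gamma> s" for s
    have cw: "continuous_on {0..T} w" unfolding w_def using adm cuu
      unfolding admissible_def by (intro continuous_intros)
    have us: "ustar \<gamma> = (\<lambda>s. uu \<gamma> s + w s)" unfolding w_def by auto
    have spl: "cost T f h g m x0 xT (ustar \<gamma>) \<gamma> = cost T f h g m x0 xT (uu \<gamma>) \<gamma>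
        + integral {0..T} (\<lambda>t. 1/2 * (norm (w t))\<^sup>2)
        + \<gamma> / 2 * (norm (integral {0..T} (\<lambda>s. k s *\<^sub>R w s)))\<^sup>2"
      unfolding costf[OF cuu] costf[OF adm[unfolded admissible_def]]
      unfolding us
      by (rule cost_split[OF ck cw, of "uu \<gamma>" "c \<gamma>" a \<gamma>]) (auto simp: uu_def gc[unfolded K_def])
    have nn: "\<gamma> / 2 * (norm (integral {0..T} (\<lambda>s. k s *\<^sub>R w s)))\<^sup>2 \<ge> 0" using g0 by simp
    have i0: "integral {0..T} (\<lambda>t. 1/2 * (norm (w t))\<^sup>2) \<ge> 0"
      by (intro integral_nonneg integrable_continuous_real continuous_intros cw) simp
    have "integral {0..T} (\<lambda>t. 1/2 * (norm (w t))\<^sup>2) = 0" using spl le nn i0 by linarith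
    moreover have "continuous_on (cbox 0 T) (\<lambda>t. 1/2 * (norm (w t))\<^sup>2)"
      unfolding cbox_interval by (intro continuous_intros cw)
    moreover have "box 0 T \<noteq> {}" using T by (simp add: box_eq_empty)
    ultimately have "\<forall>x\<in>cbox 0 T. 1/2 * (norm (w x))\<^sup>2 = 0"
      using integral_cbox_eq_0_iff[of 0 T "\<lambda>t. 1/2 * (norm (w t))\<^sup>2"]
      unfolding cbox_interval by simp
    hence "1/2 * (norm (w t))\<^sup>2 = 0" using t unfolding cbox_interval by blast
    hence "w t = 0" by simp
    thus ?thesis unfolding w_def by simp
  qed
  define uinf where "uinf t = - (1 / K * k t) *\<^sub>R a" for t
  have climit: "(c \<longlongrightarrow> 1 / K) at_top"
  proof -
    have "((\<lambda>\<gamma>. inverse (inverse \<gamma> + K)) \<longlongrightarrow> inverse (0 + K)) at_top"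
      by (intro tendsto_inverse tendsto_add tendsto_inverse_0_at_top filterlim_ident tendsto_const)
        (use Kpos in simp)
    moreover have "\<forall>\<^sub>F \<gamma> in at_top. inverse (inverse \<gamma> + K) = c \<gamma>"
      using eventually_gt_at_top[of 0]
      proof eventually_elim
      case (elim \<gamma>)
      have p: "1 + \<gamma> * K > 0" using elim Kpos by (simp add: add_pos_pos)
      have "inverse \<gamma> + K = (1 + \<gamma> * K) / \<gamma>" using elim by (simp add: field_simps)
      thus ?case using elim p by (simp add: c_def)
    qed
    ultimately show ?thesis by (simp add: tendsto_cong inverse_eq_divide)
  qed
  have conv: "((\<lambda>\<gamma>. ustar \<gamma> t) \<longlongrightarrow> uinf t) at_top" if t: "t \<in> {0..T}" for t
  proof -
    have "((\<lambda>\<gamma>. - (c \<gamma> * k t) *\<^sub>R a) \<longlongrightarrow> - (1 / K * k t) *\<^sub>R a) at_top"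
      by (intro tendsto_intros climit)
    moreover have "\<forall>\<^sub>F \<gamma> in at_top. - (c \<gamma> * k t) *\<^sub>R a = ustar \<gamma> t"
      using eventually_gt_at_top[of 0]
      by eventually_elim (simp add: same[OF _ t] uu_def)
    ultimately show ?thesis unfolding uinf_def using tendsto_cong by fastforce
  qed
  have termu: "terminal_state T f h g m x0 (ustar \<gamma>) - xT = (1 - c \<gamma> * K) *\<^sub>R a" if g0: "\<gamma> > 0" for \<gamma>
  proof -
    have adm: "continuous_on {0..T} (ustar \<gamma>)" using opt[OF g0] unfolding optimal_control_def admissible_def by blast
    have "integral {0..T} (\<lambda>s. k s *\<^sub>R ustar \<gamma> s) = integral {0..T} (\<lambda>s. k s *\<^sub>R uu \<gamma> s)"
      by (rule integral_cong) (simp add: same[OF g0])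
    also have "\<dots> = - (c \<gamma> * K) *\<^sub>R a" unfolding uu_def K_def by (rule int_ku[OF ck])
    finally show ?thesis unfolding tform[OF adm] by (simp add: algebra_simps)
  qed
  have pen: "((\<lambda>\<gamma>. \<gamma> / 2 * (norm (terminal_state T f h g m x0 (ustar \<gamma>) - xT))\<^sup>2) \<longlongrightarrow> 0) at_top"
  proof -
    have "((\<lambda>\<gamma>. c \<gamma> / 2 * (1 - c \<gamma> * K) * (norm a)\<^sup>2) \<longlongrightarrow> (1/K) / 2 * (1 - 1/K * K) * (norm a)\<^sup>2) at_top"
      by (intro tendsto_intros climit) simp_all
    hence l: "((\<lambda>\<gamma>. c \<gamma> / 2 * (1 - c \<gamma> * K) * (norm a)\<^sup>2) \<longlongrightarrow> 0) at_top" using Kpos by simp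
    have "\<forall>\<^sub>F \<gamma> in at_top. c \<gamma> / 2 * (1 - c \<gamma> * K) * (norm a)\<^sup>2
        = \<gamma> / 2 * (norm (terminal_state T f h g m x0 (ustar \<gamma>) - xT))\<^sup>2"
      using eventually_gt_at_top[of 0]
    proof eventually_elim
      case (elim \<gamma>)
      have gc: "\<gamma> * (1 - c \<gamma> * K) = c \<gamma>"
        proof -
        have "1 + \<gamma> * K > 0" using elim Kpos by (simp add: add_pos_pos)
        thus ?thesis unfolding c_def by (simp add: field_simps)
      qed
      have "\<gamma> / 2 * (norm ((1 - c \<gamma> * K) *\<^sub>R a))\<^sup>2 = (\<gamma> * (1 - c \<gamma> * K)) / 2 * (1 - c \<gamma> * K) * (norm a)\<^sup>2"
        by (simp add: power2_eq_square)
      thus ?case unfolding termu[OF elim] gc by simp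
    qed
    with l show ?thesis using tendsto_cong by fastforce
  qed
  have cuinf: "continuous_on {0..T} uinf" unfolding uinf_def by (intro continuous_intros ck)
  have final: "cost T f h g m x0 xT (ustar \<gamma>) \<gamma> \<le> integral {0..T} (\<lambda>t. 1/2 * (norm (uinf t))\<^sup>2) + 0"
    if g0: "\<gamma> > 0" for \<gamma>
  proof -
    have "cost T f h g m x0 xT (ustar \<gamma>) \<gamma> \<le> cost T f h g m x0 xT uinf \<gamma>"
      using opt[OF g0] cuinf unfolding optimal_control_def admissible_def by blast
    also have "\<dots> = integral {0..T} (\<lambda>t. 1/2 * (norm (uinf t))\<^sup>2)"
      unfolding costf[OF cuinf] unfolding uinf_def int_ku[OF ck] K_def[symmetric] using Kpos by simp
    finally show ?thesis by simp
  qed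
  show ?thesis using conv pen final by blast
qed

end
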